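(* Let $(\mu_z^\varepsilon)$ be a time-analytic local random walk on $\mathcal G$. Then for every pair of distinct vertices $x,y$ the continuous-time Ollivier–Ricci curvature ${}^{\mathcal O}\mathrm{Ric}(x,y)=\lim_{\varepsilon\downarrow0}\varepsilon^{-1}\,{}^{\mathcal O}\mathrm{Ric}_\varepsilon(x,y)$ exists and is finite.
   Context: $\mathcal G$ is a locally finite graph with vertex set $V$, $\mathrm d$ a distance on $V$ with $(V,\mathrm d)$ complete. A random walk is a family of probability measures $\mu_z^\varepsilon$ on $V$ ($z\in V$, $\varepsilon\in[0,1]$) with finite first moments, continuous in $\varepsilon$, $\mu_z^0=\delta_z$. It is local if for each $z$ there is a finite set $\mathcal K_z$ with $\mathrm{supp}(\mu_z^\varepsilon)\subset\mathcal K_z$ for all $\varepsilon$. It is time-analytic if for all $x,y$, $\varepsilon\mapsto\mu_x^\varepsilon(y)$ is analytic and admits an analytic continuation to $(-\delta_{xy},1+\delta_{xy})$ for some $\delta_{xy}>0$. ${}^{\mathcal O}\mathrm{Ric}_\varepsilon(x,y):=1-\mathcal W_1(\mu_x^\varepsilon,\mu_y^\varepsilon)/\mathrm d(x,y)$, with $\mathcal W_1$ the $L^1$-Wasserstein distance w.r.t. $\mathrm d$. *)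

theory Defs
  imports "HOL-Analysis.Analysis"
begin

definition locally_finite_graph :: "'v set \<Rightarrow> ('v \<Rightarrow> 'v \<Rightarrow> bool) \<Rightarrow> bool" where
  "locally_finite_graph V E \<longleftrightarrow>
     (\<forall>x y. E x y \<longrightarrow> x \<in> V \<and> y \<in> V \<and> E y x) \<and> (\<forall>x\<in>V. finite {y. E x y})"

definition prob_on :: "'v set \<Rightarrow> ('v \<Rightarrow> real) \<Rightarrow> bool" where
  "prob_on V m \<longleftrightarrow> (\<forall>v. m v \<ge> 0) \<and> (\<forall>v. v \<notin> V \<longrightarrow> m v = 0) \<and> (m has_sum 1) V"

definition finite_first_moment :: "'v set \<Rightarrow> ('v \<Rightarrow> 'v \<Rightarrow> real) \<Rightarrow> ('v \<Rightarrow> real) \<Rightarrow> bool" where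
  "finite_first_moment V d m \<longleftrightarrow> (\<exists>z\<in>V. (\<lambda>v. m v * d z v) summable_on V)"

definition couplings :: "'v set \<Rightarrow> ('v \<Rightarrow> 'v \<Rightarrow> real) \<Rightarrow> ('v \<Rightarrow> real) \<Rightarrow> ('v \<Rightarrow> real) \<Rightarrow> ('v \<times> 'v \<Rightarrow> real) set" where
  "couplings V d m1 m2 = {\<pi>. (\<forall>p. \<pi> p \<ge> 0) \<and> (\<forall>p. p \<notin> V \<times> V \<longrightarrow> \<pi> p = 0)
      \<and> (\<forall>a\<in>V. ((\<lambda>b. \<pi> (a, b)) has_sum m1 a) V)
      \<and> (\<forall>b\<in>V. ((\<lambda>a. \<pi> (a, b)) has_sum m2 b) V)
      \<and> (\<lambda>(a, b). \<pi> (a, b) * d a b) summable_on (V \<times> V)}"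

definition W1 :: "'v set \<Rightarrow> ('v \<Rightarrow> 'v \<Rightarrow> real) \<Rightarrow> ('v \<Rightarrow> real) \<Rightarrow> ('v \<Rightarrow> real) \<Rightarrow> real" where
  "W1 V d m1 m2 = Inf ((\<lambda>\<pi>. \<Sum>\<^sub>\<infinity>(a, b)\<in>V \<times> V. \<pi> (a, b) * d a b) ` couplings V d m1 m2)"

text \<open>A random walk: mu z eps is the measure mu_z^eps.\<close>
definition random_walk :: "'v set \<Rightarrow> ('v \<Rightarrow> 'v \<Rightarrow> real) \<Rightarrow> ('v \<Rightarrow> real \<Rightarrow> 'v \<Rightarrow> real) \<Rightarrow> bool" where
  "random_walk V d mu \<longleftrightarrow>
     (\<forall>z\<in>V. \<forall>\<epsilon>\<in>{0..1}. prob_on V (mu z \<epsilon>) \<and> finite_first_moment V d (mu z \<epsilon>))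
   \<and> (\<forall>z\<in>V. \<forall>y\<in>V. continuous_on {0..1} (\<lambda>\<epsilon>. mu z \<epsilon> y))
   \<and> (\<forall>z\<in>V. mu z 0 = (\<lambda>v. if v = z then 1 else 0))"

definition local_walk :: "'v set \<Rightarrow> ('v \<Rightarrow> real \<Rightarrow> 'v \<Rightarrow> real) \<Rightarrow> bool" where
  "local_walk V mu \<longleftrightarrow> (\<forall>z\<in>V. \<exists>K. finite K \<and> (\<forall>\<epsilon>\<in>{0..1}. {v. mu z \<epsilon> v \<noteq> 0} \<subseteq> K))"

definition real_analytic_on :: "(real \<Rightarrow> real) \<Rightarrow> real set \<Rightarrow> bool" where
  "real_analytic_on f S \<longleftrightarrow> (\<forall>x\<in>S. \<exists>r>0. \<exists>a :: nat \<Rightarrow> real.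
       \<forall>t. \<bar>t - x\<bar> < r \<longrightarrow> (\<lambda>n. a n * (t - x) ^ n) sums f t)"

definition time_analytic :: "'v set \<Rightarrow> ('v \<Rightarrow> real \<Rightarrow> 'v \<Rightarrow> real) \<Rightarrow> bool" where
  "time_analytic V mu \<longleftrightarrow> (\<forall>x\<in>V. \<forall>y\<in>V. \<exists>\<delta>>0. \<exists>f. real_analytic_on f {-\<delta><..<1+\<delta>}
       \<and> (\<forall>\<epsilon>\<in>{0..1}. f \<epsilon> = mu x \<epsilon> y))"

definition ORic_eps :: "'v set \<Rightarrow> ('v \<Rightarrow> 'v \<Rightarrow> real) \<Rightarrow> ('v \<Rightarrow> real \<Rightarrow> 'v \<Rightarrow> real) \<Rightarrow> real \<Rightarrow> 'v \<Rightarrow> 'v \<Rightarrow> real" where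
  "ORic_eps V d mu \<epsilon> x y = 1 - W1 V d (mu x \<epsilon>) (mu y \<epsilon>) / d x y"

end

theory Submission
  imports Defs
begin
definition pmK :: "'v set \<Rightarrow> ('v \<Rightarrow> real) \<Rightarrow> bool" where
  "pmK K m \<longleftrightarrow> (\<forall>v. 0 \<le> m v) \<and> (\<forall>v. v \<notin> K \<longrightarrow> m v = 0) \<and> sum m K = 1"

definition fc :: "'v set \<Rightarrow> ('v \<Rightarrow> real) \<Rightarrow> ('v \<Rightarrow> real) \<Rightarrow> ('v \<times> 'v \<Rightarrow> real) set" where
  "fc K m1 m2 = {\<pi>. (\<forall>p. 0 \<le> \<pi> p) \<and> (\<forall>p. p \<notin> K \<times> K \<longrightarrow> \<pi> p = 0)
     \<and> (\<forall>a\<in>K. (\<Sum>b\<in>K. \<pi> (a, b)) = m1 a) \<and> (\<forall>b\<in>K. (\<Sum>a\<in>K. \<pi> (a, b)) = m2 b)}"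

definition cost :: "('v \<Rightarrow> 'v \<Rightarrow> real) \<Rightarrow> 'v set \<Rightarrow> ('v \<times> 'v \<Rightarrow> real) \<Rightarrow> real" where
  "cost d K \<pi> = (\<Sum>p\<in>K \<times> K. \<pi> p * d (fst p) (snd p))"

definition FW :: "('v \<Rightarrow> 'v \<Rightarrow> real) \<Rightarrow> 'v set \<Rightarrow> ('v \<Rightarrow> real) \<Rightarrow> ('v \<Rightarrow> real) \<Rightarrow> real" where
  "FW d K m1 m2 = Inf (cost d K ` fc K m1 m2)"

lemma has_sum_nonneg_zero:
  fixes f :: "'a \<Rightarrow> real"
  assumes "(f has_sum 0) A" "\<And>x. 0 \<le> f x" "b \<in> A"
  shows "f b = 0"
proof -
  have "(f has_sum f b) {b}" using has_sum_finite[of "{b}" f] by simp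
  have "f b \<le> 0"
    using has_sum_mono_neutral[OF \<open>(f has_sum f b) {b}\<close> assms(1)] assms(2,3) by auto
  then show ?thesis using assms(2)[of b] by simp
qed

lemma fcD:
  assumes "\<pi> \<in> fc K m1 m2"
  shows "\<And>p. 0 \<le> \<pi> p" "\<And>p. p \<notin> K \<times> K \<Longrightarrow> \<pi> p = 0"
    "\<And>a. a\<in>K \<Longrightarrow> (\<Sum>b\<in>K. \<pi> (a, b)) = m1 a" "\<And>b. b\<in>K \<Longrightarrow> (\<Sum>a\<in>K. \<pi> (a, b)) = m2 b"
  using assms unfolding fc_def mem_Collect_eq by metis+

lemma couplings_fc:
  assumes "finite K" "K \<subseteq> V" "pmK K m1" "pmK K m2"
  shows "couplings V d m1 m2 = fc K m1 m2"
proof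
  show "couplings V d m1 m2 \<subseteq> fc K m1 m2"
  proof
    fix \<pi> assume p: "\<pi> \<in> couplings V d m1 m2"
    then have nn: "\<And>p. 0 \<le> \<pi> p" and out: "\<And>p. p \<notin> V \<times> V \<Longrightarrow> \<pi> p = 0"
      and row: "\<And>a. a\<in>V \<Longrightarrow> ((\<lambda>b. \<pi> (a, b)) has_sum m1 a) V"
      and col: "\<And>b. b\<in>V \<Longrightarrow> ((\<lambda>a. \<pi> (a, b)) has_sum m2 b) V"
      unfolding couplings_def by auto
    have z: "\<pi> (a, b) = 0" if "(a, b) \<notin> K \<times> K" for a b
    proof (cases "a \<in> V \<and> b \<in> V")
      case True
      show ?thesis
      proof (cases "a \<in> K")
        case False
        then have "m1 a = 0" using assms(3) unfolding pmK_def by auto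
        then have "((\<lambda>b. \<pi> (a, b)) has_sum 0) V" using row[of a] True by simp
        then show ?thesis using has_sum_nonneg_zero[of "\<lambda>b. \<pi> (a, b)"] True nn by auto
      next
        case True2: True
        then have "b \<notin> K" using that by auto
        then have "m2 b = 0" using assms(4) unfolding pmK_def by auto
        then have "((\<lambda>a. \<pi> (a, b)) has_sum 0) V" using col[of b] True by simp
        then show ?thesis using has_sum_nonneg_zero[of "\<lambda>a. \<pi> (a, b)"] True nn by auto
      qed
    next
      case False
      then show ?thesis using out by auto
    qed
    have rowK: "(\<Sum>b\<in>K. \<pi> (a, b)) = m1 a" if "a \<in> K" for a
    proof -
      have "((\<lambda>b. \<pi> (a, b)) has_sum m1 a) K"
        using row[of a] that assms(2) z
        by (subst has_sum_cong_neutral[where T=V and g="\<lambda>b. \<pi> (a, b)"]) auto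
      then show ?thesis using has_sum_finite_iff assms(1) by metis
    qed
    have colK: "(\<Sum>a\<in>K. \<pi> (a, b)) = m2 b" if "b \<in> K" for b
    proof -
      have "((\<lambda>a. \<pi> (a, b)) has_sum m2 b) K"
        using col[of b] that assms(2) z
        by (subst has_sum_cong_neutral[where T=V and g="\<lambda>a. \<pi> (a, b)"]) auto
      then show ?thesis using has_sum_finite_iff assms(1) by metis
    qed
    show "\<pi> \<in> fc K m1 m2" unfolding fc_def using nn z rowK colK by auto
  qed
next
  show "fc K m1 m2 \<subseteq> couplings V d m1 m2"
  proof
    fix \<pi> assume p: "\<pi> \<in> fc K m1 m2"
    note nn = fcD(1)[OF p] and outp = fcD(2)[OF p] and row = fcD(3)[OF p] and col = fcD(4)[OF p]
    have out: "\<And>a b. (a,b) \<notin> K \<times> K \<Longrightarrow> \<pi> (a,b) = 0" using outp by blast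
    have r: "((\<lambda>b. \<pi> (a, b)) has_sum m1 a) V" if "a \<in> V" for a
    proof (cases "a \<in> K")
      case True
      show ?thesis
      proof (rule has_sum_finite_neutralI[where B=K])
        show "\<And>x. x \<in> V - K \<Longrightarrow> \<pi> (a, x) = 0" using out by blast
      qed (use assms(1,2) row[OF True] in simp_all)
    next
      case False
      have "m1 a = 0" using assms(3) False unfolding pmK_def by blast
      show ?thesis
      proof (rule has_sum_finite_neutralI[where B="{}"])
        show "\<And>x. x \<in> V - {} \<Longrightarrow> \<pi> (a, x) = 0" using out False by blast
      qed (use \<open>m1 a = 0\<close> in simp_all)
    qed
    have c: "((\<lambda>a. \<pi> (a, b)) has_sum m2 b) V" if "b \<in> V" for b
    proof (cases "b \<in> K")
      case True
      show ?thesis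
      proof (rule has_sum_finite_neutralI[where B=K])
        show "\<And>x. x \<in> V - K \<Longrightarrow> \<pi> (x, b) = 0" using out by blast
      qed (use assms(1,2) col[OF True] in simp_all)
    next
      case False
      have "m2 b = 0" using assms(4) False unfolding pmK_def by blast
      show ?thesis
      proof (rule has_sum_finite_neutralI[where B="{}"])
        show "\<And>x. x \<in> V - {} \<Longrightarrow> \<pi> (x, b) = 0" using out False by blast
      qed (use \<open>m2 b = 0\<close> in simp_all)
    qed
    have s: "(\<lambda>(a, b). \<pi> (a, b) * d a b) summable_on (V \<times> V)"
    proof -
      have z0: "\<And>p. p \<in> V\<times>V - K\<times>K \<Longrightarrow> (\<lambda>(a, b). \<pi> (a, b) * d a b) p = 0"
      proof -
        fix p assume "p \<in> V\<times>V - K\<times>K"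
        then have "\<pi> p = 0" using outp by blast
        then show "(\<lambda>(a, b). \<pi> (a, b) * d a b) p = 0" by (simp add: case_prod_beta)
      qed
      have "((\<lambda>(a, b). \<pi> (a, b) * d a b) has_sum (\<Sum>p\<in>K\<times>K. (\<lambda>(a, b). \<pi> (a, b) * d a b) p)) (V\<times>V)"
      proof (rule has_sum_finite_neutralI)
        show "finite (K \<times> K)" using assms(1) by simp
        show "K \<times> K \<subseteq> V \<times> V" using assms(2) by blast
      qed (fact z0, rule refl)
      then show ?thesis by (rule has_sum_imp_summable)
    qed
    have o3: "\<forall>p. p \<notin> V \<times> V \<longrightarrow> \<pi> p = 0"
    proof (intro allI impI)
      fix p :: "'a \<times> 'a" assume "p \<notin> V \<times> V"
      then have "p \<notin> K \<times> K" using assms(2) by (cases p) auto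
      then show "\<pi> p = 0" by (rule outp)
    qed
    show "\<pi> \<in> couplings V d m1 m2" unfolding couplings_def mem_Collect_eq
      using nn r c s o3 by blast
  qed
qed

lemma W1_FW:
  assumes "finite K" "K \<subseteq> V" "pmK K m1" "pmK K m2"
  shows "W1 V d m1 m2 = FW d K m1 m2"
proof -
  have "(\<Sum>\<^sub>\<infinity>(a, b)\<in>V \<times> V. \<pi> (a, b) * d a b) = cost d K \<pi>" if "\<pi> \<in> fc K m1 m2" for \<pi>
  proof -
    have outp: "\<And>p. p \<notin> K \<times> K \<Longrightarrow> \<pi> p = 0" using fcD(2)[OF that] by blast
    have o2: "\<And>p. p \<in> V\<times>V - K\<times>K \<Longrightarrow> (\<lambda>(a, b). \<pi> (a, b) * d a b) p = 0"
      proof -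
        fix p assume "p \<in> V\<times>V - K\<times>K"
        then have "\<pi> p = 0" using outp by blast
        then show "(\<lambda>(a, b). \<pi> (a, b) * d a b) p = 0" by (simp add: case_prod_beta)
      qed
    have "((\<lambda>(a, b). \<pi> (a, b) * d a b) has_sum cost d K \<pi>) (V \<times> V)"
      unfolding cost_def using assms(1,2) o2
      by (intro has_sum_finite_neutralI[where B="K\<times>K"]) (auto simp: case_prod_beta)
    then show ?thesis by (rule infsumI)
  qed
  then show ?thesis unfolding W1_def FW_def couplings_fc[OF assms]
    by (metis (no_types, lifting) image_cong)
qed

lemma cost_alt: "finite K \<Longrightarrow> cost d K \<pi> = (\<Sum>a\<in>K. \<Sum>b\<in>K. \<pi> (a, b) * d a b)"
  unfolding cost_def by (simp add: sum.cartesian_product case_prod_unfold)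

lemma prod_in_fc:
  assumes "finite K" "pmK K m1" "pmK K m2"
  shows "(\<lambda>p. m1 (fst p) * m2 (snd p)) \<in> fc K m1 m2"
proof -
  have "(\<Sum>b\<in>K. m1 a * m2 b) = m1 a" for a
    using assms(3) unfolding pmK_def by (simp add: sum_distrib_left[symmetric])
  moreover have "(\<Sum>a\<in>K. m1 a * m2 b) = m2 b" for b
    using assms(2) unfolding pmK_def by (simp add: sum_distrib_right[symmetric])
  moreover have "\<forall>p. p \<notin> K \<times> K \<longrightarrow> m1 (fst p) * m2 (snd p) = 0"
    using assms(2,3) unfolding pmK_def by (auto simp: mem_Times_iff)
  moreover have "\<forall>p. 0 \<le> m1 (fst p) * m2 (snd p)"
    using assms(2,3) unfolding pmK_def by simp
  ultimately show ?thesis unfolding fc_def mem_Collect_eq fst_conv snd_conv by blast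
qed

lemma fc_nonempty: "finite K \<Longrightarrow> pmK K m1 \<Longrightarrow> pmK K m2 \<Longrightarrow> fc K m1 m2 \<noteq> {}"
  using prod_in_fc by blast

lemma cost_nonneg: "\<pi> \<in> fc K m1 m2 \<Longrightarrow> (\<And>a b. 0 \<le> d a b) \<Longrightarrow> 0 \<le> cost d K \<pi>"
  unfolding cost_def using fcD(1) by (intro sum_nonneg) (simp add: fcD(1))

lemma FW_le: "\<pi> \<in> fc K m1 m2 \<Longrightarrow> (\<And>a b. 0 \<le> d a b) \<Longrightarrow> FW d K m1 m2 \<le> cost d K \<pi>"
  unfolding FW_def
  by (rule cInf_lower) (auto intro!: bdd_belowI[where m=0] cost_nonneg)

lemma FW_ge: "fc K m1 m2 \<noteq> {} \<Longrightarrow> (\<And>\<pi>. \<pi> \<in> fc K m1 m2 \<Longrightarrow> c \<le> cost d K \<pi>) \<Longrightarrow> c \<le> FW d K m1 m2"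
  unfolding FW_def by (rule cInf_greatest) auto

lemma cost_lower:
  assumes "finite K" "\<pi> \<in> fc K m1 m2" "y \<in> K"
    and tri: "\<And>a b. a \<in> K \<Longrightarrow> b \<in> K \<Longrightarrow> d a y \<le> d a b + d b y"
  shows "(\<Sum>a\<in>K. m1 a * d a y) - (\<Sum>b\<in>K. m2 b * d b y) \<le> cost d K \<pi>"
proof -
  note nn = fcD(1)[OF assms(2)] and row = fcD(3)[OF assms(2)] and col = fcD(4)[OF assms(2)]
  have "(\<Sum>a\<in>K. m1 a * d a y) = (\<Sum>a\<in>K. \<Sum>b\<in>K. \<pi> (a, b) * d a y)"
    by (intro sum.cong refl) (simp add: row[symmetric] sum_distrib_right)
  moreover have "(\<Sum>b\<in>K. m2 b * d b y) = (\<Sum>a\<in>K. \<Sum>b\<in>K. \<pi> (a, b) * d b y)"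
    by (subst sum.swap) (intro sum.cong refl, simp add: col[symmetric] sum_distrib_right)
  moreover have "(\<Sum>a\<in>K. \<Sum>b\<in>K. \<pi> (a, b) * d a y) - (\<Sum>a\<in>K. \<Sum>b\<in>K. \<pi> (a, b) * d b y)
      = (\<Sum>a\<in>K. \<Sum>b\<in>K. \<pi> (a, b) * (d a y - d b y))"
    by (simp add: sum_subtractf[symmetric] right_diff_distrib)
  moreover have "\<dots> \<le> (\<Sum>a\<in>K. \<Sum>b\<in>K. \<pi> (a, b) * d a b)"
    using tri nn by (intro sum_mono mult_left_mono) (auto simp: algebra_simps)
  ultimately show ?thesis using cost_alt[OF assms(1), of d \<pi>] by linarith
qed

definition dlt :: "'v \<Rightarrow> 'v \<Rightarrow> real" where "dlt x = (\<lambda>v. if v = x then 1 else 0)"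

lemma sum_dlt: "finite K \<Longrightarrow> x \<in> K \<Longrightarrow> (\<Sum>a\<in>K. dlt x a * f a) = f x"
proof -
  assume "finite K" "x \<in> K"
  have "(\<Sum>a\<in>K. dlt x a * f a) = (\<Sum>a\<in>K. if a = x then f a else 0)"
    by (intro sum.cong) (auto simp: dlt_def)
  then show ?thesis using \<open>finite K\<close> \<open>x \<in> K\<close> by (simp add: sum.delta)
qed

lemma pmK_dlt: "finite K \<Longrightarrow> x \<in> K \<Longrightarrow> pmK K (dlt x)"
  unfolding pmK_def dlt_def by auto

lemma FW_dlt:
  assumes "finite K" "x \<in> K" "y \<in> K" "\<And>a b. 0 \<le> d a b" "d y y = 0"
    and tri: "\<And>a b. a \<in> K \<Longrightarrow> b \<in> K \<Longrightarrow> d a y \<le> d a b + d b y"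
  shows "FW d K (dlt x) (dlt y) = d x y"
proof (rule antisym)
  define \<pi> where "\<pi> p = (if p = (x, y) then 1 else (0::real))" for p
  have "\<pi> \<in> fc K (dlt x) (dlt y)"
    unfolding fc_def \<pi>_def dlt_def using assms(1,2,3) by auto
  moreover have "cost d K \<pi> = d x y"
  proof -
    have "cost d K \<pi> = (\<Sum>p\<in>K\<times>K. if p = (x,y) then d (fst p) (snd p) else 0)"
      unfolding cost_def \<pi>_def by (intro sum.cong) auto
    also have "\<dots> = d x y" using assms(1,2,3) by (simp add: sum.delta)
    finally show ?thesis .
  qed
  ultimately show "FW d K (dlt x) (dlt y) \<le> d x y" using FW_le assms(4) by metis
next
  show "d x y \<le> FW d K (dlt x) (dlt y)"
  proof (rule FW_ge)
    show "fc K (dlt x) (dlt y) \<noteq> {}" using fc_nonempty pmK_dlt assms by metis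
    fix \<pi> assume "\<pi> \<in> fc K (dlt x) (dlt y)"
    from cost_lower[where d=d, OF assms(1) this assms(3) tri]
    show "d x y \<le> cost d K \<pi>" using assms(1,2,3,5) by (simp add: sum_dlt)
  qed
qed

lemma swap_fc:
  assumes "finite K" "\<pi> \<in> fc K m1 m2" "\<And>a b. d a b = d b a"
  shows "(\<lambda>p. \<pi> (snd p, fst p)) \<in> fc K m2 m1 \<and> cost d K (\<lambda>p. \<pi> (snd p, fst p)) = cost d K \<pi>"
proof
  note f = fcD[OF assms(2)]
  have "\<forall>p. 0 \<le> \<pi> (snd p, fst p)" using f(1) by blast
  moreover have "\<forall>p. p \<notin> K \<times> K \<longrightarrow> \<pi> (snd p, fst p) = 0"
  proof (intro allI impI)
    fix p :: "'a \<times> 'a" assume "p \<notin> K \<times> K"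
    then have "(snd p, fst p) \<notin> K \<times> K" by (cases p) auto
    then show "\<pi> (snd p, fst p) = 0" by (rule f(2))
  qed
  moreover have "\<forall>a\<in>K. (\<Sum>b\<in>K. \<pi> (b, a)) = m2 a" using f(4) by blast
  moreover have "\<forall>b\<in>K. (\<Sum>a\<in>K. \<pi> (b, a)) = m1 b" using f(3) by blast
  ultimately show "(\<lambda>p. \<pi> (snd p, fst p)) \<in> fc K m2 m1"
    unfolding fc_def mem_Collect_eq snd_conv fst_conv by blast
  show "cost d K (\<lambda>p. \<pi> (snd p, fst p)) = cost d K \<pi>"
    unfolding cost_alt[OF assms(1)]
  proof (subst sum.swap, intro sum.cong refl)
    fix a b show "\<pi> (snd (b, a), fst (b, a)) * d b a = \<pi> (a, b) * d a b"
      using assms(3)[of a b] by simp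
  qed
qed

lemma FW_sym:
  assumes "finite K" "\<And>a b. d a b = d b a"
  shows "FW d K m1 m2 = FW d K m2 m1"
proof -
  have sub: "cost d K ` fc K m1 m2 \<subseteq> cost d K ` fc K m2 m1" for m1 m2
  proof
    fix c assume "c \<in> cost d K ` fc K m1 m2"
    then obtain \<pi> where p: "\<pi> \<in> fc K m1 m2" and c: "c = cost d K \<pi>" by blast
    note sw = swap_fc[OF assms(1) p assms(2)]
    have h1: "(\<lambda>p. \<pi> (snd p, fst p)) \<in> fc K m2 m1" using sw by (rule conjunct1)
    have h2: "cost d K (\<lambda>p. \<pi> (snd p, fst p)) = cost d K \<pi>" using sw by (rule conjunct2)
    show "c \<in> cost d K ` fc K m2 m1" unfolding c h2[symmetric] by (rule imageI[OF h1])
  qed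
  have "cost d K ` fc K m1 m2 = cost d K ` fc K m2 m1" by (rule subset_antisym) (rule sub)+
  then show ?thesis unfolding FW_def by simp
qed

lemma FW_approx:
  assumes "fc K m1 m2 \<noteq> {}" "\<And>a b. 0 \<le> d a b" "0 < e"
  shows "\<exists>\<pi>\<in>fc K m1 m2. cost d K \<pi> < FW d K m1 m2 + e"
proof -
  have ne: "cost d K ` fc K m1 m2 \<noteq> {}" using assms(1) by simp
  have bd: "bdd_below (cost d K ` fc K m1 m2)"
    by (rule bdd_belowI[where m=0]) (auto intro: cost_nonneg assms(2))
  have "Inf (cost d K ` fc K m1 m2) < FW d K m1 m2 + e" unfolding FW_def using assms(3) by simp
  then obtain c where "c \<in> cost d K ` fc K m1 m2" "c < FW d K m1 m2 + e"
    using cInf_less_iff[OF ne bd] by blast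
  then show ?thesis by blast
qed

lemma mix_fc:
  assumes "finite K" "\<pi> \<in> fc K m1 m2" "\<sigma> \<in> fc K n1 n2" "0 \<le> t" "t \<le> 1"
  shows "(\<lambda>p. (1-t) * \<pi> p + t * \<sigma> p) \<in> fc K (\<lambda>v. (1-t) * m1 v + t * n1 v) (\<lambda>v. (1-t) * m2 v + t * n2 v)
     \<and> cost d K (\<lambda>p. (1-t) * \<pi> p + t * \<sigma> p) = (1-t) * cost d K \<pi> + t * cost d K \<sigma>"
proof
  note f = fcD[OF assms(2)] and g = fcD[OF assms(3)]
  have "\<forall>p. 0 \<le> (1-t) * \<pi> p + t * \<sigma> p" using f(1) g(1) assms(4,5) by simp
  moreover have "\<forall>p. p \<notin> K \<times> K \<longrightarrow> (1-t) * \<pi> p + t * \<sigma> p = 0"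
  proof (intro allI impI)
    fix p :: "'a \<times> 'a" assume "p \<notin> K \<times> K"
    then show "(1-t) * \<pi> p + t * \<sigma> p = 0" using f(2)[of p] g(2)[of p] by simp
  qed
  moreover have "\<forall>a\<in>K. (\<Sum>b\<in>K. (1-t) * \<pi> (a, b) + t * \<sigma> (a, b)) = (1-t) * m1 a + t * n1 a"
    using f(3) g(3) by (simp add: sum.distrib sum_distrib_left[symmetric])
  moreover have "\<forall>b\<in>K. (\<Sum>a\<in>K. (1-t) * \<pi> (a, b) + t * \<sigma> (a, b)) = (1-t) * m2 b + t * n2 b"
    using f(4) g(4) by (simp add: sum.distrib sum_distrib_left[symmetric])
  ultimately show "(\<lambda>p. (1-t) * \<pi> p + t * \<sigma> p) \<in> fc K (\<lambda>v. (1-t) * m1 v + t * n1 v) (\<lambda>v. (1-t) * m2 v + t * n2 v)"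
    unfolding fc_def mem_Collect_eq by blast
  show "cost d K (\<lambda>p. (1-t) * \<pi> p + t * \<sigma> p) = (1-t) * cost d K \<pi> + t * cost d K \<sigma>"
  proof -
    have "cost d K (\<lambda>p. (1-t) * \<pi> p + t * \<sigma> p)
       = (\<Sum>p\<in>K \<times> K. (1-t) * (\<pi> p * d (fst p) (snd p)) + t * (\<sigma> p * d (fst p) (snd p)))"
      unfolding cost_def by (intro sum.cong refl) (simp add: distrib_right)
    also have "\<dots> = (1-t) * cost d K \<pi> + t * cost d K \<sigma>"
      unfolding cost_def by (simp add: sum.distrib sum_distrib_left)
    finally show ?thesis .
  qed
qed

lemma pmK_mix:
  assumes "pmK K m" "pmK K n" "0 \<le> t" "t \<le> 1"
  shows "pmK K (\<lambda>v. (1-t) * m v + t * n v)"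
  using assms unfolding pmK_def by (simp add: sum.distrib sum_distrib_left[symmetric])

lemma FW_convex:
  assumes "finite K" "pmK K m1" "pmK K m2" "pmK K n1" "pmK K n2" "0 \<le> t" "t \<le> 1"
    and dnn: "\<And>a b. 0 \<le> d a b"
  shows "FW d K (\<lambda>v. (1-t) * m1 v + t * n1 v) (\<lambda>v. (1-t) * m2 v + t * n2 v)
     \<le> (1-t) * FW d K m1 m2 + t * FW d K n1 n2"
proof (rule field_le_epsilon)
  fix e :: real assume e: "0 < e"
  obtain \<pi> where p: "\<pi> \<in> fc K m1 m2" "cost d K \<pi> < FW d K m1 m2 + e"
    using FW_approx[where d=d, OF fc_nonempty[OF assms(1,2,3)] dnn e] by blast
  obtain \<sigma> where s: "\<sigma> \<in> fc K n1 n2" "cost d K \<sigma> < FW d K n1 n2 + e"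
    using FW_approx[where d=d, OF fc_nonempty[OF assms(1,4,5)] dnn e] by blast
  note mx = mix_fc[OF assms(1) p(1) s(1) assms(6,7), of d]
  have "FW d K (\<lambda>v. (1-t) * m1 v + t * n1 v) (\<lambda>v. (1-t) * m2 v + t * n2 v)
      \<le> cost d K (\<lambda>p. (1-t) * \<pi> p + t * \<sigma> p)"
    by (rule FW_le[OF conjunct1[OF mx] dnn])
  also have "\<dots> = (1-t) * cost d K \<pi> + t * cost d K \<sigma>" by (rule conjunct2[OF mx])
  also have "\<dots> \<le> (1-t) * (FW d K m1 m2 + e) + t * (FW d K n1 n2 + e)"
    using p(2) s(2) assms(6,7) by (intro add_mono mult_left_mono) auto
  also have "\<dots> = (1-t) * FW d K m1 m2 + t * FW d K n1 n2 + e" by (simp add: algebra_simps)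
  finally show "FW d K (\<lambda>v. (1-t) * m1 v + t * n1 v) (\<lambda>v. (1-t) * m2 v + t * n2 v)
      \<le> (1-t) * FW d K m1 m2 + t * FW d K n1 n2 + e" .
qed

lemma lip_coupling:
  assumes fin: "finite K" and pm1: "pmK K m1" and pn1: "pmK K n1" and pm2: "pmK K m2"
    and dnn: "\<And>a b. 0 \<le> d a b" and dD: "\<And>a b. a \<in> K \<Longrightarrow> b \<in> K \<Longrightarrow> d a b \<le> D"
    and D0: "0 \<le> D"
    and p: "\<pi> \<in> fc K n1 m2"
  shows "\<exists>\<pi>'\<in>fc K m1 m2. cost d K \<pi>' \<le> cost d K \<pi> + D * (\<Sum>v\<in>K. \<bar>m1 v - n1 v\<bar>)"
proof -
  note f = fcD[OF p]
  have m1nn: "\<And>v. 0 \<le> m1 v" and m1out: "\<And>v. v \<notin> K \<Longrightarrow> m1 v = 0" and m1s: "sum m1 K = 1"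
    using pm1 unfolding pmK_def by auto
  have n1nn: "\<And>v. 0 \<le> n1 v" and n1out: "\<And>v. v \<notin> K \<Longrightarrow> n1 v = 0" and n1s: "sum n1 K = 1"
    using pn1 unfolding pmK_def by auto
  have m2nn: "\<And>v. 0 \<le> m2 v" and m2out: "\<And>v. v \<notin> K \<Longrightarrow> m2 v = 0" and m2s: "sum m2 K = 1"
    using pm2 unfolding pmK_def by auto
  define c where "c a = min (m1 a) (n1 a)" for a
  define \<rho> where "\<rho> p = \<pi> p * (c (fst p) / n1 (fst p))" for p
  define \<nu> where "\<nu> b = (\<Sum>a\<in>K. \<rho> (a, b))" for b
  define e where "e a = m1 a - c a" for a
  define g where "g b = m2 b - \<nu> b" for b
  define s where "s = sum e K"
  define \<pi>' where "\<pi>' p = \<rho> p + e (fst p) * g (snd p) / s" for p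
  have cnn: "0 \<le> c a" for a unfolding c_def using m1nn n1nn by simp
  have q01: "0 \<le> c a / n1 a \<and> c a / n1 a \<le> 1" for a
    using cnn[of a] n1nn[of a] unfolding c_def by (cases "n1 a = 0") auto
  have rnn: "0 \<le> \<rho> p" for p
    unfolding \<rho>_def by (rule mult_nonneg_nonneg[OF f(1) conjunct1[OF q01]])
  have rle: "\<rho> p \<le> \<pi> p" for p
    unfolding \<rho>_def by (rule mult_left_le[OF conjunct2[OF q01] f(1)])
  have rout: "\<rho> p = 0" if "p \<notin> K \<times> K" for p unfolding \<rho>_def using f(2)[OF that] by simp
  have rrow: "(\<Sum>b\<in>K. \<rho> (a, b)) = c a" if "a \<in> K" for a
  proof -
    have "(\<Sum>b\<in>K. \<rho> (a, b)) = (\<Sum>b\<in>K. \<pi> (a, b)) * (c a / n1 a)"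
      unfolding \<rho>_def fst_conv by (rule sum_distrib_right[symmetric])
    also have "\<dots> = n1 a * (c a / n1 a)" using f(3)[OF that] by simp
    also have "\<dots> = c a"
    proof (cases "n1 a = 0")
      case True
      then have "c a = 0" using m1nn[of a] unfolding c_def by (simp add: min_def)
      then show ?thesis using True by simp
    qed simp
    finally show ?thesis .
  qed
  have enn: "0 \<le> e a" for a unfolding e_def c_def by simp
  have eout: "e a = 0" if "a \<notin> K" for a unfolding e_def c_def using m1out[OF that] n1out[OF that] by simp
  have \<nu>le: "\<nu> b \<le> m2 b" if "b \<in> K" for b
  proof -
    have "\<nu> b \<le> (\<Sum>a\<in>K. \<pi> (a, b))" unfolding \<nu>_def by (intro sum_mono rle)
    then show ?thesis using f(4)[OF that] by simp
  qed
  have \<nu>out: "\<nu> b = 0" if "b \<notin> K" for b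
    unfolding \<nu>_def using rout that by (intro sum.neutral) auto
  have gnn: "0 \<le> g b" for b
    using \<nu>le[of b] \<nu>out[of b] m2nn[of b] unfolding g_def by (cases "b \<in> K") auto
  have gout: "g b = 0" if "b \<notin> K" for b unfolding g_def using \<nu>out[OF that] m2out[OF that] by simp
  have snn: "0 \<le> s" unfolding s_def using enn by (simp add: sum_nonneg)
  have sumc: "sum c K = 1 - s" unfolding s_def e_def using m1s by (simp add: sum_subtractf)
  have sumg: "sum g K = s"
  proof -
    have "sum \<nu> K = (\<Sum>a\<in>K. \<Sum>b\<in>K. \<rho> (a, b))" unfolding \<nu>_def by (rule sum.swap)
    also have "\<dots> = sum c K" using rrow by simp
    finally have "sum \<nu> K = 1 - s" using sumc by simp
    then show ?thesis unfolding g_def using m2s by (simp add: sum_subtractf)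
  qed
  have e0: "e a = 0" if "s = 0" "a \<in> K" for a
    using that fin enn unfolding s_def by (simp add: sum_nonneg_eq_0_iff)
  have g0: "g b = 0" if "s = 0" "b \<in> K" for b
    using that fin gnn sumg by (simp add: sum_nonneg_eq_0_iff)
  have row': "(\<Sum>b\<in>K. \<pi>' (a, b)) = m1 a" if "a \<in> K" for a
  proof -
    have "(\<Sum>b\<in>K. \<pi>' (a, b)) = c a + e a * sum g K / s"
      unfolding \<pi>'_def using rrow[OF that] by (simp add: sum.distrib sum_distrib_left sum_divide_distrib)
    also have "\<dots> = m1 a"
      using e0[of a] that unfolding sumg e_def by (cases "s = 0") auto
    finally show ?thesis .
  qed
  have col': "(\<Sum>a\<in>K. \<pi>' (a, b)) = m2 b" if "b \<in> K" for b
  proof -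
    have "(\<Sum>a\<in>K. \<pi>' (a, b)) = \<nu> b + sum e K * g b / s"
      unfolding \<pi>'_def \<nu>_def by (simp add: sum.distrib sum_distrib_right sum_divide_distrib)
    also have "\<dots> = m2 b"
      using g0[of b] that unfolding s_def[symmetric] g_def by (cases "s = 0") auto
    finally show ?thesis .
  qed
  have nn': "\<forall>p. 0 \<le> \<pi>' p" unfolding \<pi>'_def using rnn enn gnn snn by simp
  have out': "\<forall>p. p \<notin> K \<times> K \<longrightarrow> \<pi>' p = 0"
  proof (intro allI impI)
    fix p :: "'a \<times> 'a" assume h: "p \<notin> K \<times> K"
    then have "fst p \<notin> K \<or> snd p \<notin> K" by (cases p) auto
    then have "e (fst p) * g (snd p) = 0" using eout gout by auto
    then show "\<pi>' p = 0" unfolding \<pi>'_def using rout[OF h] by simp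
  qed
  have mem: "\<pi>' \<in> fc K m1 m2"
    unfolding fc_def mem_Collect_eq using nn' out' row' col' by blast
  have c1: "(\<Sum>p\<in>K \<times> K. \<rho> p * d (fst p) (snd p)) \<le> cost d K \<pi>"
    unfolding cost_def using rle dnn by (intro sum_mono mult_right_mono) auto
  have c2: "(\<Sum>p\<in>K \<times> K. e (fst p) * g (snd p) / s * d (fst p) (snd p)) \<le> D * s"
  proof -
    have "(\<Sum>p\<in>K \<times> K. e (fst p) * g (snd p) / s * d (fst p) (snd p))
        \<le> (\<Sum>p\<in>K \<times> K. e (fst p) * g (snd p) / s * D)"
      using dD enn gnn snn by (intro sum_mono mult_left_mono) (auto simp: mem_Times_iff)
    also have "\<dots> = (\<Sum>a\<in>K. \<Sum>b\<in>K. (e a * (D / s)) * g b)"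
      by (simp add: sum.cartesian_product case_prod_unfold mult_ac)
    also have "\<dots> = (\<Sum>a\<in>K. (e a * (D / s)) * sum g K)"
      by (simp only: sum_distrib_left)
    also have "\<dots> = sum e K * (D / s) * sum g K"
      by (simp only: sum_distrib_right)
    also have "\<dots> = D * (sum e K * sum g K / s)" by simp
    also have "\<dots> = D * s" unfolding sumg s_def[symmetric] by (cases "s = 0") auto
    finally show ?thesis .
  qed
  have c3: "s \<le> (\<Sum>v\<in>K. \<bar>m1 v - n1 v\<bar>)"
    unfolding s_def e_def c_def by (intro sum_mono) auto
  have "cost d K \<pi>' = (\<Sum>p\<in>K \<times> K. \<rho> p * d (fst p) (snd p))
      + (\<Sum>p\<in>K \<times> K. e (fst p) * g (snd p) / s * d (fst p) (snd p))"
    unfolding cost_def \<pi>'_def by (simp add: distrib_right sum.distrib)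
  also have "\<dots> \<le> cost d K \<pi> + D * (\<Sum>v\<in>K. \<bar>m1 v - n1 v\<bar>)"
    using c1 c2 mult_left_mono[OF c3 D0] by linarith
  finally show ?thesis using mem by blast
qed

lemma FW_lip1:
  assumes fin: "finite K" and pm1: "pmK K m1" and pn1: "pmK K n1" and pm2: "pmK K m2"
    and dnn: "\<And>a b. 0 \<le> d a b" and dD: "\<And>a b. a \<in> K \<Longrightarrow> b \<in> K \<Longrightarrow> d a b \<le> D"
    and D0: "0 \<le> D"
  shows "FW d K m1 m2 \<le> FW d K n1 m2 + D * (\<Sum>v\<in>K. \<bar>m1 v - n1 v\<bar>)"
proof -
  have "FW d K m1 m2 - D * (\<Sum>v\<in>K. \<bar>m1 v - n1 v\<bar>) \<le> FW d K n1 m2"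
  proof (rule FW_ge)
    show "fc K n1 m2 \<noteq> {}" by (rule fc_nonempty[OF fin pn1 pm2])
    fix \<pi> assume "\<pi> \<in> fc K n1 m2"
    from lip_coupling[where d=d, OF fin pm1 pn1 pm2 dnn dD D0 this]
    obtain \<pi>' where "\<pi>' \<in> fc K m1 m2" "cost d K \<pi>' \<le> cost d K \<pi> + D * (\<Sum>v\<in>K. \<bar>m1 v - n1 v\<bar>)"
      by blast
    moreover have "FW d K m1 m2 \<le> cost d K \<pi>'" using FW_le[OF \<open>\<pi>' \<in> fc K m1 m2\<close> dnn] .
    ultimately show "FW d K m1 m2 - D * (\<Sum>v\<in>K. \<bar>m1 v - n1 v\<bar>) \<le> cost d K \<pi>" by linarith
  qed
  then show ?thesis by linarith
qed

lemma FW_lip: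
  assumes fin: "finite K" "pmK K m1" "pmK K n1" "pmK K m2" "pmK K n2"
    and dnn: "\<And>a b. 0 \<le> d a b" and dsym: "\<And>a b. d a b = d b a"
    and dD: "\<And>a b. a \<in> K \<Longrightarrow> b \<in> K \<Longrightarrow> d a b \<le> D" and D0: "0 \<le> D"
  shows "\<bar>FW d K m1 m2 - FW d K n1 n2\<bar> \<le> D * ((\<Sum>v\<in>K. \<bar>m1 v - n1 v\<bar>) + (\<Sum>v\<in>K. \<bar>m2 v - n2 v\<bar>))"
proof -
  have l: "FW d K p1 p2 \<le> FW d K q1 q2 + D * ((\<Sum>v\<in>K. \<bar>p1 v - q1 v\<bar>) + (\<Sum>v\<in>K. \<bar>p2 v - q2 v\<bar>))"
    if "pmK K p1" "pmK K q1" "pmK K p2" "pmK K q2" for p1 q1 p2 q2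
  proof -
    have "FW d K p1 p2 \<le> FW d K q1 p2 + D * (\<Sum>v\<in>K. \<bar>p1 v - q1 v\<bar>)"
      by (rule FW_lip1[OF fin(1) that(1,2,3) dnn dD D0])
    also have "FW d K q1 p2 = FW d K p2 q1" by (rule FW_sym[OF fin(1) dsym])
    also have "FW d K p2 q1 \<le> FW d K q2 q1 + D * (\<Sum>v\<in>K. \<bar>p2 v - q2 v\<bar>)"
      by (rule FW_lip1[OF fin(1) that(3,4,2) dnn dD D0])
    also have "FW d K q2 q1 = FW d K q1 q2" by (rule FW_sym[OF fin(1) dsym])
    finally show ?thesis by (simp add: algebra_simps)
  qed
  have a: "\<bar>m1 v - n1 v\<bar> = \<bar>n1 v - m1 v\<bar>" "\<bar>m2 v - n2 v\<bar> = \<bar>n2 v - m2 v\<bar>" for v by auto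
  show ?thesis using l[OF fin(2,3,4,5)] l[OF fin(3,2,5,4)] unfolding a by linarith
qed

lemma ta_deriv:
  assumes "time_analytic V mu" "z \<in> V" "v \<in> V"
  shows "\<exists>L. ((\<lambda>\<epsilon>. (mu z \<epsilon> v - mu z 0 v) / \<epsilon>) \<longlongrightarrow> L) (at_right 0)"
proof -
  obtain \<delta> f where \<delta>: "\<delta> > 0" and an: "real_analytic_on f {-\<delta><..<1+\<delta>}"
    and eq: "\<forall>\<epsilon>\<in>{0..1}. f \<epsilon> = mu z \<epsilon> v"
    using assms unfolding time_analytic_def by blast
  have "0 \<in> {-\<delta><..<1+\<delta>}" using \<delta> by simp
  then obtain r a where r: "r > 0" and ps: "\<forall>t. \<bar>t - 0\<bar> < r \<longrightarrow> (\<lambda>n. a n * (t - 0) ^ n) sums f t"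
    using an unfolding real_analytic_on_def by blast
  define g where "g t = (\<Sum>n. a n * t ^ n)" for t :: real
  have fg: "f t = g t" if "t \<in> {-r<..<r}" for t
  proof -
    have "\<bar>t - 0\<bar> < r" using that by auto
    then have "(\<lambda>n. a n * (t - 0) ^ n) sums f t" using ps by blast
    then show ?thesis unfolding g_def by (simp add: sums_iff)
  qed
  have sm: "summable (\<lambda>n. a n * (r/2) ^ n)"
    using ps r by (auto intro!: sums_summable[where l="f (r/2)"])
  have "DERIV g 0 :> (\<Sum>n. diffs a n * 0 ^ n)"
    unfolding g_def by (rule termdiffs_strong[OF sm]) (use r in simp)
  then have "DERIV f 0 :> (\<Sum>n. diffs a n * 0 ^ n)"
    by (rule has_field_derivative_transform_within_open[where S="{-r<..<r}"]) (use r fg in auto)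
  then have "((\<lambda>h. (f (0 + h) - f 0) / h) \<longlongrightarrow> (\<Sum>n. diffs a n * 0 ^ n)) (at 0)"
    by (simp only: DERIV_def)
  then have t: "((\<lambda>h. (f h - f 0) / h) \<longlongrightarrow> (\<Sum>n. diffs a n * 0 ^ n)) (at_right 0)"
    by (auto intro: tendsto_within_subset)
  have ev: "eventually (\<lambda>h. (f h - f 0) / h = (mu z h v - mu z 0 v) / h) (at_right 0)"
    unfolding eventually_at_right_field
    by (rule exI[where x=1]) (use eq in auto)
  show ?thesis using Lim_transform_eventually[OF t ev] by blast
qed

lemma pmK_walk:
  assumes "random_walk V d mu" "z \<in> V" "\<epsilon> \<in> {0..1}" "finite K" "K \<subseteq> V"
    and sub: "\<And>v. mu z \<epsilon> v \<noteq> 0 \<Longrightarrow> v \<in> V \<Longrightarrow> v \<in> K"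
  shows "pmK K (mu z \<epsilon>)"
proof -
  have "prob_on V (mu z \<epsilon>)" using assms(1,2,3) unfolding random_walk_def by blast
  then have nn: "\<And>v. 0 \<le> mu z \<epsilon> v" and outV: "\<And>v. v \<notin> V \<Longrightarrow> mu z \<epsilon> v = 0"
    and hs: "(mu z \<epsilon> has_sum 1) V" unfolding prob_on_def by auto
  have out: "mu z \<epsilon> v = 0" if "v \<notin> K" for v
    using sub[of v] outV[of v] that by blast
  have "(mu z \<epsilon> has_sum 1) K"
    using hs assms(5) out by (subst has_sum_cong_neutral[where T=V and g="mu z \<epsilon>"]) auto
  then have "sum (mu z \<epsilon>) K = 1" using has_sum_finite_iff[OF assms(4)] by metis
  then show ?thesis unfolding pmK_def using nn out by blast
qed

lemma pmK_lin:
  assumes "finite K" "x \<in> K" "\<And>v. v \<notin> K \<Longrightarrow> B v = 0" "\<And>v. v \<noteq> x \<Longrightarrow> 0 \<le> B v"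
    "sum B K = 0" "0 \<le> t" "t * \<bar>B x\<bar> \<le> 1"
  shows "pmK K (\<lambda>v. dlt x v + t * B v)"
proof -
  have "0 \<le> dlt x v + t * B v" for v
  proof (cases "v = x")
    case True
    have "- (t * B x) \<le> t * \<bar>B x\<bar>" using mult_left_mono[OF abs_ge_minus_self[of "B x"] assms(6)] by simp
    then show ?thesis using True assms(7) by (simp add: dlt_def)
  next
    case False
    then show ?thesis using assms(4)[OF False] assms(6) by (simp add: dlt_def)
  qed
  moreover have "\<forall>v. v \<notin> K \<longrightarrow> dlt x v + t * B v = 0" using assms(2,3) by (auto simp: dlt_def)
  moreover have "(\<Sum>v\<in>K. dlt x v + t * B v) = 1"
    using assms(1,2,5) by (simp add: sum.distrib sum_distrib_left[symmetric] dlt_def)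
  ultimately show ?thesis unfolding pmK_def by blast
qed

lemma slope_lim:
  fixes \<phi> :: "real \<Rightarrow> real"
  assumes e0: "0 < e0"
    and mono: "\<And>s t. 0 < s \<Longrightarrow> s \<le> t \<Longrightarrow> t \<le> e0 \<Longrightarrow> (\<phi> s - \<phi> 0) / s \<le> (\<phi> t - \<phi> 0) / t"
    and bnd: "\<And>t. 0 < t \<Longrightarrow> t \<le> e0 \<Longrightarrow> C \<le> (\<phi> t - \<phi> 0) / t"
  shows "\<exists>S. ((\<lambda>t. (\<phi> t - \<phi> 0) / t) \<longlongrightarrow> S) (at_right 0)"
proof -
  define sl where "sl s = (\<phi> (min s e0) - \<phi> 0) / min s e0" for s
  have "(sl \<longlongrightarrow> Inf (sl ` ({0<..} \<inter> UNIV))) (at 0 within ({0<..} \<inter> UNIV))"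
  proof (rule Lim_right_bound)
    fix a b :: real assume "a \<in> UNIV" "b \<in> UNIV" "0 < a" "a \<le> b"
    then show "sl a \<le> sl b" unfolding sl_def using e0 by (intro mono) auto
  next
    fix a :: real assume "a \<in> UNIV" "0 < a"
    then show "C \<le> sl a" unfolding sl_def using e0 by (intro bnd) auto
  qed
  then have t: "(sl \<longlongrightarrow> Inf (sl ` ({0<..} \<inter> UNIV))) (at_right 0)" by simp
  have ev: "eventually (\<lambda>t. sl t = (\<phi> t - \<phi> 0) / t) (at_right 0)"
    unfolding eventually_at_right_field sl_def
    by (rule exI[where x=e0]) (use e0 in auto)
  show ?thesis using Lim_transform_eventually[OF t ev] by blast
qed

lemma err_lim:
  assumes "finite K" "\<forall>v\<in>K. ((\<lambda>\<epsilon>. (m \<epsilon> v - m0 v) / \<epsilon>) \<longlongrightarrow> B v) (at_right 0)"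
  shows "((\<lambda>\<epsilon>. \<Sum>v\<in>K. \<bar>m \<epsilon> v - (m0 v + \<epsilon> * B v)\<bar> / \<epsilon>) \<longlongrightarrow> 0) (at_right (0::real))"
proof -
  have "((\<lambda>\<epsilon>. \<Sum>v\<in>K. \<bar>(m \<epsilon> v - m0 v) / \<epsilon> - B v\<bar>) \<longlongrightarrow> (\<Sum>v\<in>K. \<bar>B v - B v\<bar>)) (at_right 0)"
    using assms(2) by (intro tendsto_intros) auto
  then have t: "((\<lambda>\<epsilon>. \<Sum>v\<in>K. \<bar>(m \<epsilon> v - m0 v) / \<epsilon> - B v\<bar>) \<longlongrightarrow> 0) (at_right 0)" by simp
  have ev: "eventually (\<lambda>\<epsilon>. (\<Sum>v\<in>K. \<bar>(m \<epsilon> v - m0 v) / \<epsilon> - B v\<bar>)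
      = (\<Sum>v\<in>K. \<bar>m \<epsilon> v - (m0 v + \<epsilon> * B v)\<bar> / \<epsilon>)) (at_right 0)"
  proof -
    have "(\<Sum>v\<in>K. \<bar>(m \<epsilon> v - m0 v) / \<epsilon> - B v\<bar>) = (\<Sum>v\<in>K. \<bar>m \<epsilon> v - (m0 v + \<epsilon> * B v)\<bar> / \<epsilon>)"
      if "0 < \<epsilon>" for \<epsilon> :: real
    proof (intro sum.cong refl)
      fix v
      have "(m \<epsilon> v - m0 v) / \<epsilon> - B v = (m \<epsilon> v - (m0 v + \<epsilon> * B v)) / \<epsilon>"
        using that by (simp add: field_simps)
      then show "\<bar>(m \<epsilon> v - m0 v) / \<epsilon> - B v\<bar> = \<bar>m \<epsilon> v - (m0 v + \<epsilon> * B v)\<bar> / \<epsilon>"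
        using that by simp
    qed
    then show ?thesis unfolding eventually_at_right_field by (intro exI[where x=1]) auto
  qed
  show ?thesis by (rule Lim_transform_eventually[OF t ev])
qed

lemma deriv_props:
  assumes fin: "finite K" and xK: "x \<in> K" and pm': "\<forall>\<epsilon>\<in>{0..1}. pmK K (m \<epsilon>)"
    and m0: "m 0 = dlt x"
    and A: "\<forall>v\<in>K. ((\<lambda>\<epsilon>. (m \<epsilon> v - m 0 v) / \<epsilon>) \<longlongrightarrow> A v) (at_right 0)"
  shows "\<And>v. v \<in> K \<Longrightarrow> v \<noteq> x \<Longrightarrow> 0 \<le> A v" and "sum A K = 0"
proof -
  have pm: "pmK K (m \<epsilon>)" if "\<epsilon> \<in> {0..1}" for \<epsilon> using pm' that by blast
  fix v assume v: "v \<in> K" "v \<noteq> x"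
  have ev: "eventually (\<lambda>\<epsilon>. 0 \<le> (m \<epsilon> v - m 0 v) / \<epsilon>) (at_right 0)"
  proof -
    have "0 \<le> (m \<epsilon> v - m 0 v) / \<epsilon>" if "0 < \<epsilon>" "\<epsilon> < 1" for \<epsilon> :: real
    proof -
      have "0 \<le> m \<epsilon> v" using pm[of \<epsilon>] that unfolding pmK_def by auto
      moreover have "m 0 v = 0" using m0 v unfolding dlt_def by simp
      ultimately show ?thesis using that by simp
    qed
    then show ?thesis unfolding eventually_at_right_field by (intro exI[where x=1]) auto
  qed
  show "0 \<le> A v" by (rule tendsto_lowerbound[OF A[rule_format, OF v(1)] ev]) simp
next
  have pm: "pmK K (m \<epsilon>)" if "\<epsilon> \<in> {0..1}" for \<epsilon> using pm' that by blast
  have t: "((\<lambda>\<epsilon>. \<Sum>v\<in>K. (m \<epsilon> v - m 0 v) / \<epsilon>) \<longlongrightarrow> sum A K) (at_right 0)"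
    using A by (intro tendsto_sum) auto
  have ev: "eventually (\<lambda>\<epsilon>. (\<Sum>v\<in>K. (m \<epsilon> v - m 0 v) / \<epsilon>) = 0) (at_right 0)"
  proof -
    have "(\<Sum>v\<in>K. (m \<epsilon> v - m 0 v) / \<epsilon>) = 0" if "0 < \<epsilon>" "\<epsilon> < 1" for \<epsilon> :: real
    proof -
      have "sum (m \<epsilon>) K = 1" "sum (m 0) K = 1" using pm[of \<epsilon>] pm[of 0] that unfolding pmK_def by auto
      then show ?thesis by (simp add: sum_divide_distrib[symmetric] sum_subtractf)
    qed
    then show ?thesis unfolding eventually_at_right_field by (intro exI[where x=1]) auto
  qed
  have "((\<lambda>\<epsilon>. \<Sum>v\<in>K. (m \<epsilon> v - m 0 v) / \<epsilon>) \<longlongrightarrow> 0) (at_right (0::real))"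
  proof -
    have ev': "eventually (\<lambda>\<epsilon>. 0 = (\<Sum>v\<in>K. (m \<epsilon> v - m 0 v) / \<epsilon>)) (at_right 0)"
      using ev by (rule eventually_mono) simp
    show ?thesis by (rule Lim_transform_eventually[OF tendsto_const ev'])
  qed
  then show "sum A K = 0" using tendsto_unique[OF _ t] by simp
qed

theorem mainTheorem8:
  fixes V :: "'v set" and E :: "'v \<Rightarrow> 'v \<Rightarrow> bool" and d :: "'v \<Rightarrow> 'v \<Rightarrow> real"
    and mu :: "'v \<Rightarrow> real \<Rightarrow> 'v \<Rightarrow> real"
  assumes "locally_finite_graph V E"
    and "Metric_space V d" and "Metric_space.mcomplete V d"
    and "random_walk V d mu" and "local_walk V mu" and "time_analytic V mu"
    and "x \<in> V" and "y \<in> V" and "x \<noteq> y"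
  shows "\<exists>L::real. ((\<lambda>\<epsilon>. ORic_eps V d mu \<epsilon> x y / \<epsilon>) \<longlongrightarrow> L) (at_right 0)"
proof -
  note ms = assms(2) and rw = assms(4) and ta = assms(6) and xV = assms(7) and yV = assms(8)
  have dnn: "\<And>a b. 0 \<le> d a b" using Metric_space.nonneg[OF ms] .
  have dsym: "\<And>a b. d a b = d b a" using Metric_space.commute[OF ms] .
  have tri: "\<And>a b c. a \<in> V \<Longrightarrow> b \<in> V \<Longrightarrow> c \<in> V \<Longrightarrow> d a c \<le> d a b + d b c"
    using Metric_space.triangle[OF ms] .
  have dyy: "d y y = 0" using Metric_space.zero[OF ms yV yV] by simp
  have dxy: "0 < d x y" using Metric_space.zero[OF ms xV yV] assms(9) dnn[of x y] by simp
  obtain Kx where Kx: "finite Kx" "\<forall>\<epsilon>\<in>{0..1}. {v. mu x \<epsilon> v \<noteq> 0} \<subseteq> Kx"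
    using assms(5) xV unfolding local_walk_def by blast
  obtain Ky where Ky: "finite Ky" "\<forall>\<epsilon>\<in>{0..1}. {v. mu y \<epsilon> v \<noteq> 0} \<subseteq> Ky"
    using assms(5) yV unfolding local_walk_def by blast
  define K where "K = (Kx \<union> Ky \<union> {x, y}) \<inter> V"
  have fin: "finite K" unfolding K_def using Kx(1) Ky(1) by simp
  have KV: "K \<subseteq> V" unfolding K_def by blast
  have xK: "x \<in> K" and yK: "y \<in> K" unfolding K_def using xV yV by auto
  have pmx: "pmK K (mu x \<epsilon>)" if "\<epsilon> \<in> {0..1}" for \<epsilon>
  proof (rule pmK_walk[OF rw xV that fin KV])
    fix v assume "mu x \<epsilon> v \<noteq> 0" "v \<in> V"
    then show "v \<in> K" using Kx(2) that unfolding K_def by blast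
  qed
  have pmy: "pmK K (mu y \<epsilon>)" if "\<epsilon> \<in> {0..1}" for \<epsilon>
  proof (rule pmK_walk[OF rw yV that fin KV])
    fix v assume "mu y \<epsilon> v \<noteq> 0" "v \<in> V"
    then show "v \<in> K" using Ky(2) that unfolding K_def by blast
  qed
  have W: "W1 V d (mu x \<epsilon>) (mu y \<epsilon>) = FW d K (mu x \<epsilon>) (mu y \<epsilon>)" if "\<epsilon> \<in> {0..1}" for \<epsilon>
    by (rule W1_FW[OF fin KV pmx[OF that] pmy[OF that]])
  have mux0: "mu x 0 = dlt x" and muy0: "mu y 0 = dlt y"
    using rw xV yV unfolding random_walk_def dlt_def by auto
  have "\<forall>v\<in>K. \<exists>L. ((\<lambda>\<epsilon>. (mu x \<epsilon> v - mu x 0 v) / \<epsilon>) \<longlongrightarrow> L) (at_right 0)"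
    using ta_deriv[OF ta xV] KV by blast
  then obtain A1 where A1: "\<forall>v\<in>K. ((\<lambda>\<epsilon>. (mu x \<epsilon> v - mu x 0 v) / \<epsilon>) \<longlongrightarrow> A1 v) (at_right 0)"
    by (rule bchoice[THEN exE]) blast
  have "\<forall>v\<in>K. \<exists>L. ((\<lambda>\<epsilon>. (mu y \<epsilon> v - mu y 0 v) / \<epsilon>) \<longlongrightarrow> L) (at_right 0)"
    using ta_deriv[OF ta yV] KV by blast
  then obtain A2 where A2: "\<forall>v\<in>K. ((\<lambda>\<epsilon>. (mu y \<epsilon> v - mu y 0 v) / \<epsilon>) \<longlongrightarrow> A2 v) (at_right 0)"
    by (rule bchoice[THEN exE]) blast
  define B1 where "B1 v = (if v \<in> K then A1 v else 0)" for v
  define B2 where "B2 v = (if v \<in> K then A2 v else 0)" for v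
  have B1A: "\<forall>v\<in>K. ((\<lambda>\<epsilon>. (mu x \<epsilon> v - mu x 0 v) / \<epsilon>) \<longlongrightarrow> B1 v) (at_right 0)"
    using A1 by (simp add: B1_def)
  have B2A: "\<forall>v\<in>K. ((\<lambda>\<epsilon>. (mu y \<epsilon> v - mu y 0 v) / \<epsilon>) \<longlongrightarrow> B2 v) (at_right 0)"
    using A2 by (simp add: B2_def)
  have pmx': "\<forall>\<epsilon>\<in>{0..1}. pmK K (mu x \<epsilon>)" and pmy': "\<forall>\<epsilon>\<in>{0..1}. pmK K (mu y \<epsilon>)"
    using pmx pmy by blast+
  note dp1 = deriv_props[OF fin xK pmx' mux0 B1A]
    and dp2 = deriv_props[OF fin yK pmy' muy0 B2A]
  have B1out: "\<And>v. v \<notin> K \<Longrightarrow> B1 v = 0" and B2out: "\<And>v. v \<notin> K \<Longrightarrow> B2 v = 0"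
    unfolding B1_def B2_def by auto
  have B1nn: "0 \<le> B1 v" if "v \<noteq> x" for v
  proof (cases "v \<in> K")
    case True
    then show ?thesis using dp1(1)[OF True that] by simp
  qed (simp add: B1_def)
  have B2nn: "0 \<le> B2 v" if "v \<noteq> y" for v
  proof (cases "v \<in> K")
    case True
    then show ?thesis using dp2(1)[OF True that] by simp
  qed (simp add: B2_def)
  define e0 where "e0 = 1 / (1 + \<bar>B1 x\<bar> + \<bar>B2 y\<bar>)"
  have e0: "0 < e0" "e0 \<le> 1" unfolding e0_def by (auto simp: field_simps)
  have e0x: "t * \<bar>B1 x\<bar> \<le> 1" and e0y: "t * \<bar>B2 y\<bar> \<le> 1" if "0 \<le> t" "t \<le> e0" for t
  proof -
    have "t * (1 + \<bar>B1 x\<bar> + \<bar>B2 y\<bar>) \<le> e0 * (1 + \<bar>B1 x\<bar> + \<bar>B2 y\<bar>)"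
      using that by (intro mult_right_mono) auto
    also have "\<dots> = 1" unfolding e0_def by (simp add: field_simps)
    finally have "t * (1 + \<bar>B1 x\<bar> + \<bar>B2 y\<bar>) \<le> 1" .
    moreover have "t * \<bar>B1 x\<bar> \<le> t * (1 + \<bar>B1 x\<bar> + \<bar>B2 y\<bar>)"
      using that by (intro mult_left_mono) auto
    moreover have "t * \<bar>B2 y\<bar> \<le> t * (1 + \<bar>B1 x\<bar> + \<bar>B2 y\<bar>)"
      using that by (intro mult_left_mono) auto
    ultimately show "t * \<bar>B1 x\<bar> \<le> 1" "t * \<bar>B2 y\<bar> \<le> 1" by linarith+
  qed
  define p1 where "p1 t = (\<lambda>v. dlt x v + t * B1 v)" for t
  define p2 where "p2 t = (\<lambda>v. dlt y v + t * B2 v)" for t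
  have pp1: "pmK K (p1 t)" if "0 \<le> t" "t \<le> e0" for t
    unfolding p1_def by (rule pmK_lin[OF fin xK B1out B1nn dp1(2) that(1) e0x[OF that]])
  have pp2: "pmK K (p2 t)" if "0 \<le> t" "t \<le> e0" for t
    unfolding p2_def by (rule pmK_lin[OF fin yK B2out B2nn dp2(2) that(1) e0y[OF that]])
  define \<phi> where "\<phi> t = FW d K (p1 t) (p2 t)" for t
  have triK: "d a y \<le> d a b + d b y" if "a \<in> K" "b \<in> K" for a b
    by (rule tri) (use that KV yK in auto)
  have \<phi>0: "\<phi> 0 = d x y"
  proof -
    have "p1 0 = dlt x" "p2 0 = dlt y" unfolding p1_def p2_def by auto
    then show ?thesis unfolding \<phi>_def using FW_dlt[where d=d, OF fin xK yK dnn dyy triK] by simp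
  qed
  have conv: "(\<phi> s - \<phi> 0) / s \<le> (\<phi> t - \<phi> 0) / t" if st: "0 < s" "s \<le> t" "t \<le> e0" for s t
  proof -
    define l where "l = s / t"
    have l: "0 \<le> l" "l \<le> 1" unfolding l_def using st by auto
    have "FW d K (\<lambda>v. (1-l) * p1 0 v + l * p1 t v) (\<lambda>v. (1-l) * p2 0 v + l * p2 t v)
        \<le> (1-l) * FW d K (p1 0) (p2 0) + l * FW d K (p1 t) (p2 t)"
      using e0 st by (intro FW_convex[where d=d, OF fin pp1 pp2 pp1 pp2 l dnn]) auto
    moreover have "(\<lambda>v. (1-l) * p1 0 v + l * p1 t v) = p1 s" "(\<lambda>v. (1-l) * p2 0 v + l * p2 t v) = p2 s"
      unfolding p1_def p2_def l_def using st by (auto simp: field_simps)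
    ultimately have "\<phi> s \<le> (1-l) * \<phi> 0 + l * \<phi> t" unfolding \<phi>_def by simp
    then have "\<phi> s - \<phi> 0 \<le> l * (\<phi> t - \<phi> 0)" by (simp add: algebra_simps)
    then have "(\<phi> s - \<phi> 0) / s \<le> l * (\<phi> t - \<phi> 0) / s" using st by (simp add: divide_right_mono)
    also have "\<dots> = (\<phi> t - \<phi> 0) / t" unfolding l_def using st by simp
    finally show ?thesis .
  qed
  define C where "C = (\<Sum>a\<in>K. B1 a * d a y) - (\<Sum>b\<in>K. B2 b * d b y)"
  have lowb: "C \<le> (\<phi> t - \<phi> 0) / t" if t: "0 < t" "t \<le> e0" for t
  proof -
    have "(\<Sum>a\<in>K. p1 t a * d a y) - (\<Sum>b\<in>K. p2 t b * d b y) \<le> \<phi> t"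
      unfolding \<phi>_def
    proof (rule FW_ge)
      show "fc K (p1 t) (p2 t) \<noteq> {}" using fc_nonempty[OF fin pp1 pp2] t by simp
    qed (rule cost_lower[where d=d, OF fin _ yK triK])
    moreover have "(\<Sum>a\<in>K. p1 t a * d a y) = d x y + t * (\<Sum>a\<in>K. B1 a * d a y)"
      unfolding p1_def using sum_dlt[OF fin xK, of "\<lambda>a. d a y"]
      by (simp add: distrib_right sum.distrib sum_distrib_left mult.assoc)
    moreover have "(\<Sum>b\<in>K. p2 t b * d b y) = d y y + t * (\<Sum>b\<in>K. B2 b * d b y)"
      unfolding p2_def using sum_dlt[OF fin yK, of "\<lambda>a. d a y"]
      by (simp add: distrib_right sum.distrib sum_distrib_left mult.assoc)
    ultimately have "t * C \<le> \<phi> t - \<phi> 0" using \<phi>0 dyy unfolding C_def by (simp add: algebra_simps)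
    then show ?thesis using t by (simp add: field_simps)
  qed
  obtain S where S: "((\<lambda>t. (\<phi> t - \<phi> 0) / t) \<longlongrightarrow> S) (at_right 0)"
    using slope_lim[OF e0(1) conv lowb] by blast
  define D where "D = (\<Sum>p\<in>K \<times> K. d (fst p) (snd p))"
  have dD: "d a b \<le> D" if "a \<in> K" "b \<in> K" for a b
  proof -
    have "(\<lambda>p. d (fst p) (snd p)) (a, b) \<le> D" unfolding D_def
      by (rule member_le_sum) (use that fin dnn in auto)
    then show ?thesis by simp
  qed
  have D0: "0 \<le> D" unfolding D_def by (rule sum_nonneg) (rule dnn)
  define R where "R \<epsilon> = (\<Sum>v\<in>K. \<bar>mu x \<epsilon> v - (mu x 0 v + \<epsilon> * B1 v)\<bar> / \<epsilon>)
      + (\<Sum>v\<in>K. \<bar>mu y \<epsilon> v - (mu y 0 v + \<epsilon> * B2 v)\<bar> / \<epsilon>)" for \<epsilon>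
  have R0: "(R \<longlongrightarrow> 0) (at_right 0)"
    unfolding R_def using tendsto_add[OF err_lim[OF fin B1A] err_lim[OF fin B2A]] by simp
  have bound: "norm ((FW d K (mu x \<epsilon>) (mu y \<epsilon>) - \<phi> \<epsilon>) / \<epsilon>) \<le> D * R \<epsilon>"
    if \<epsilon>: "0 < \<epsilon>" "\<epsilon> < e0" for \<epsilon>
  proof -
    have i: "\<epsilon> \<in> {0..1}" using \<epsilon> e0 by auto
    have "\<bar>FW d K (mu x \<epsilon>) (mu y \<epsilon>) - \<phi> \<epsilon>\<bar>
        \<le> D * ((\<Sum>v\<in>K. \<bar>mu x \<epsilon> v - p1 \<epsilon> v\<bar>) + (\<Sum>v\<in>K. \<bar>mu y \<epsilon> v - p2 \<epsilon> v\<bar>))"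
      unfolding \<phi>_def
      by (rule FW_lip[where d=d, OF fin pmx[OF i] pp1 pmy[OF i] pp2 dnn dsym dD D0]) (use \<epsilon> in auto)
    also have "(\<Sum>v\<in>K. \<bar>mu x \<epsilon> v - p1 \<epsilon> v\<bar>) = (\<Sum>v\<in>K. \<bar>mu x \<epsilon> v - (mu x 0 v + \<epsilon> * B1 v)\<bar>)"
      unfolding p1_def mux0 ..
    also have "(\<Sum>v\<in>K. \<bar>mu y \<epsilon> v - p2 \<epsilon> v\<bar>) = (\<Sum>v\<in>K. \<bar>mu y \<epsilon> v - (mu y 0 v + \<epsilon> * B2 v)\<bar>)"
      unfolding p2_def muy0 ..
    finally have "\<bar>FW d K (mu x \<epsilon>) (mu y \<epsilon>) - \<phi> \<epsilon>\<bar> / \<epsilon> \<le> D * R \<epsilon> * \<epsilon> / \<epsilon>"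
      unfolding R_def using \<epsilon>
      by (simp add: sum_divide_distrib[symmetric] add_divide_distrib[symmetric] divide_right_mono)
    then show ?thesis using \<epsilon> by simp
  qed
  have E0: "((\<lambda>\<epsilon>. (FW d K (mu x \<epsilon>) (mu y \<epsilon>) - \<phi> \<epsilon>) / \<epsilon>) \<longlongrightarrow> 0) (at_right 0)"
  proof (rule Lim_null_comparison)
    show "eventually (\<lambda>\<epsilon>. norm ((FW d K (mu x \<epsilon>) (mu y \<epsilon>) - \<phi> \<epsilon>) / \<epsilon>) \<le> D * R \<epsilon>) (at_right 0)"
      unfolding eventually_at_right_field by (rule exI[where x=e0]) (use e0 bound in auto)
    show "((\<lambda>\<epsilon>. D * R \<epsilon>) \<longlongrightarrow> 0) (at_right 0)"
      using tendsto_mult[OF tendsto_const[of D] R0] by simp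
  qed
  have lim: "((\<lambda>\<epsilon>. (- ((\<phi> \<epsilon> - \<phi> 0) / \<epsilon>) - (FW d K (mu x \<epsilon>) (mu y \<epsilon>) - \<phi> \<epsilon>) / \<epsilon>) / d x y)
      \<longlongrightarrow> (- S - 0) / d x y) (at_right 0)"
    by (intro tendsto_intros S E0) (use dxy in simp)
  have ev: "eventually (\<lambda>\<epsilon>. (- ((\<phi> \<epsilon> - \<phi> 0) / \<epsilon>) - (FW d K (mu x \<epsilon>) (mu y \<epsilon>) - \<phi> \<epsilon>) / \<epsilon>) / d x y
      = ORic_eps V d mu \<epsilon> x y / \<epsilon>) (at_right 0)"
  proof -
    have "(- ((\<phi> \<epsilon> - \<phi> 0) / \<epsilon>) - (FW d K (mu x \<epsilon>) (mu y \<epsilon>) - \<phi> \<epsilon>) / \<epsilon>) / d x y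
      = ORic_eps V d mu \<epsilon> x y / \<epsilon>" if \<epsilon>: "0 < \<epsilon>" "\<epsilon> < e0" for \<epsilon>
    proof -
      have i: "\<epsilon> \<in> {0..1}" using \<epsilon> e0 by auto
      show ?thesis unfolding ORic_eps_def W[OF i] \<phi>0 using \<epsilon> dxy
        by (simp add: field_simps)
    qed
    then show ?thesis unfolding eventually_at_right_field by (intro exI[where x=e0]) (use e0 in auto)
  qed
  show ?thesis using Lim_transform_eventually[OF lim ev] by blast
qed

end
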